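(* Let $n \geqslant 1$ and let $c \in \mathfrak{S}_{n+1}$ be a Coxeter element. Set $\lambda = \boldsymbol{\lambda}(c)$. Then $\mathcal{RSK}_{\lambda,c} = \mathcal{RSK}_\lambda$.
   Context: Coxeter elements: $s_i=(i,i+1)$; $c\in\mathfrak{S}_{n+1}$ is Coxeter if it is a product of $s_1,\dots,s_n$ each exactly once. Every Coxeter element is a long cycle $c=(c_1,\dots,c_m,c_{m+1},\dots,c_{n+1})$ with $c_1=1<c_2<\dots<c_m=n+1>c_{m+1}>\dots>c_{n+1}>1$; put $\mathbf L_c=\{c_2,\dots,c_{m-1}\}$, $\mathbf R_c=\{c_{m+1},\dots,c_{n+1}\}$. With $\mathbf L=\mathbf L_c\cup\{1\}=\{\ell_1<\dots<\ell_p\}$, $\mathbf R=\mathbf R_c\cup\{n+1\}$, $\boldsymbol\lambda(c)$ is the integer partition with $\boldsymbol\lambda(c)_i=\#\{r\in\mathbf R:\ell_i<r\}$; its Ferrers diagram $\mathrm{Fer}(\lambda)=\{(i,j):j\le\lambda_i\}$ has row $i$ labelled $\ell_i$ and column $j$ labelled $r_{q-j+1}$ where $\mathbf R=\{r_1<\dots<r_q\}$; write $[\ell,r]$ for the box with row label $\ell$ and column label $r$ (it exists iff $\ell<r$). One has $\lambda_1+\ell(\lambda)-1=n$. Diagonals: $D_k(\lambda)=\{(i,j)\in\mathrm{Fer}(\lambda):\lambda_1+i-j=k\}$, $\delta_k=\max\{\min(i,j):(i,j)\in D_k(\lambda)\}$; the box $(i,j)\in D_k(\lambda)$ has coordinates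 $\langle k,\delta\rangle_\lambda$ with $\delta=\delta_k-\min(i,j)+1$. $\square_k(\lambda)$ is the order ideal of $(\mathrm{Fer}(\lambda),\text{componentwise order})$ generated by $D_k(\lambda)$. Greene–Kleitman invariant: for an acyclic directed graph $G$ and $g:G_0\to\mathbb{N}$, $M_t$ ($t\ge1$) is the maximum over $t$-tuples of (possibly one-vertex) directed paths of the sum of $g$ over the union of their vertex sets, $M_0=0$, and $\mathrm{GK}_G(g)=(M_t-M_{t-1})_{t\ge1}$. $\mathcal{RSK}_\lambda$ (Gansner): $G_\lambda$ is the directed graph on $\mathrm{Fer}(\lambda)$ with arrows $(i,j)\to(i,j+1)$ and $(i,j)\to(i+1,j)$; for a filling $f:\mathrm{Fer}(\lambda)\to\mathbb{N}$, $\mathcal{RSK}_\lambda(f)(\langle k,\delta\rangle_\lambda)$ is the $\delta$-th part of $\mathrm{GK}$ of $f$ restricted to the full subgraph of $G_\lambda$ on $\square_k(\lambda)$. $\mathcal{RSK}_{\lambda,c}$: $\mathrm{AR}(c)$ is the directed graph on transpositions $(i,j)$, $1\le i<j\le n+1$, with arrows $(i,j)\to(i,c(j))$ if $i<c(j)$ and $(i,j)\to(c(i),j)$ if $c(i)<j$; $\mathrm{AR}^{[k]}(c)$ is its full subgraph on $(\ell,r)$ with $\ell\le k<r$. For a filling $f$ of $\lambda$, $\mathrm{rep}_{\lambda,c}(f)(\ell,r)=f([\ell,r])$ if $\ell\in\mathbf L,r\in\mathbf R,\ell<r$ and $0$ otherwise; $\mathcal{RSK}_{\lambda,c}(f)(\langle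 k,\delta\rangle_\lambda)$ is the $\delta$-th part of $\mathrm{GK}_{\mathrm{AR}^{[k]}(c)}$ of the restriction of $\mathrm{rep}_{\lambda,c}(f)$. *)

theory Defs
  imports Main "HOL-Combinatorics.Transposition"
begin

(* Permutations of {1..n+1} are functions nat => nat (identity outside).
   s_i = transpose i (i+1).  A Coxeter element is a product of s_1..s_n,
   each exactly once, in some order. *)
definition coxeter :: "nat \<Rightarrow> (nat \<Rightarrow> nat) \<Rightarrow> bool" where
  "coxeter n c \<longleftrightarrow> (\<exists>xs. distinct xs \<and> set xs = {1..n} \<and>
      c = foldr (\<lambda>i g. transpose i (Suc i) \<circ> g) xs id)"

(* cycle c = (c_1,...,c_{n+1}) with c_1 = 1, c_{k+1} = c(c_k), so c_k = c^(k-1)(1);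
   m_idx = m - 1 where c_m = n+1 *)
definition m_idx :: "nat \<Rightarrow> (nat \<Rightarrow> nat) \<Rightarrow> nat" where
  "m_idx n c = (LEAST j. (c ^^ j) 1 = Suc n)"

(* L = L_c \<union> {1} = {c_1,...,c_{m-1}} *)
definition Lset :: "nat \<Rightarrow> (nat \<Rightarrow> nat) \<Rightarrow> nat set" where
  "Lset n c = {(c ^^ j) 1 | j. j < m_idx n c}"

(* R = R_c \<union> {n+1} = {c_m,...,c_{n+1}} *)
definition Rset :: "nat \<Rightarrow> (nat \<Rightarrow> nat) \<Rightarrow> nat set" where
  "Rset n c = {(c ^^ j) 1 | j. m_idx n c \<le> j \<and> j \<le> n}"

definition ell :: "nat \<Rightarrow> (nat \<Rightarrow> nat) \<Rightarrow> nat \<Rightarrow> nat" where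
  "ell n c i = sorted_list_of_set (Lset n c) ! (i - 1)"

(* the partition lambda(c), as a function of the 1-based row index (0 outside 1..p) *)
definition lamc :: "nat \<Rightarrow> (nat \<Rightarrow> nat) \<Rightarrow> nat \<Rightarrow> nat" where
  "lamc n c i = (if 1 \<le> i \<and> i \<le> card (Lset n c)
                  then card {r \<in> Rset n c. ell n c i < r} else 0)"

(* Ferrers diagram of a partition lam (1-based parts, lam i = 0 beyond its length) *)
definition Fer :: "(nat \<Rightarrow> nat) \<Rightarrow> (nat \<times> nat) set" where
  "Fer lam = {(i, j). 1 \<le> i \<and> 1 \<le> j \<and> j \<le> lam i}"

definition Diag :: "(nat \<Rightarrow> nat) \<Rightarrow> nat \<Rightarrow> (nat \<times> nat) set" where
  "Diag lam k = {(i, j) \<in> Fer lam. lam 1 + i = k + j}"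

definition delta :: "(nat \<Rightarrow> nat) \<Rightarrow> nat \<Rightarrow> nat" where
  "delta lam k = Max ((\<lambda>(i, j). min i j) ` Diag lam k)"

definition sq :: "(nat \<Rightarrow> nat) \<Rightarrow> nat \<Rightarrow> (nat \<times> nat) set" where
  "sq lam k = {b \<in> Fer lam. \<exists>d \<in> Diag lam k. fst b \<le> fst d \<and> snd b \<le> snd d}"

(* diagonal index k and depth delta of a box (i,j), i.e. (i,j) = <k,delta>_lam *)
definition box_k :: "(nat \<Rightarrow> nat) \<Rightarrow> nat \<times> nat \<Rightarrow> nat" where
  "box_k lam b = lam 1 + fst b - snd b"

definition box_delta :: "(nat \<Rightarrow> nat) \<Rightarrow> nat \<times> nat \<Rightarrow> nat" where
  "box_delta lam b = delta lam (box_k lam b) - min (fst b) (snd b) + 1"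

(* Greene-Kleitman invariant of the full subgraph on V of a digraph with arrows E *)
definition is_path :: "'a set \<Rightarrow> ('a \<Rightarrow> 'a \<Rightarrow> bool) \<Rightarrow> 'a list \<Rightarrow> bool" where
  "is_path V E p \<longleftrightarrow> p \<noteq> [] \<and> distinct p \<and> set p \<subseteq> V \<and>
     (\<forall>i. Suc i < length p \<longrightarrow> E (p ! i) (p ! Suc i))"

definition gkM :: "'a set \<Rightarrow> ('a \<Rightarrow> 'a \<Rightarrow> bool) \<Rightarrow> ('a \<Rightarrow> nat) \<Rightarrow> nat \<Rightarrow> nat" where
  "gkM V E g t = Max {sum g (\<Union>p \<in> set ps. set p) | ps. length ps = t \<and> (\<forall>p \<in> set ps. is_path V E p)}"

definition gk_part :: "'a set \<Rightarrow> ('a \<Rightarrow> 'a \<Rightarrow> bool) \<Rightarrow> ('a \<Rightarrow> nat) \<Rightarrow> nat \<Rightarrow> nat" where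
  "gk_part V E g d = gkM V E g d - gkM V E g (d - 1)"

definition gl_edge :: "nat \<times> nat \<Rightarrow> nat \<times> nat \<Rightarrow> bool" where
  "gl_edge a b \<longleftrightarrow> (fst b = fst a \<and> snd b = Suc (snd a)) \<or> (fst b = Suc (fst a) \<and> snd b = snd a)"

definition RSK_lam :: "(nat \<Rightarrow> nat) \<Rightarrow> (nat \<times> nat \<Rightarrow> nat) \<Rightarrow> nat \<times> nat \<Rightarrow> nat" where
  "RSK_lam lam f b = gk_part (sq lam (box_k lam b)) gl_edge f (box_delta lam b)"

(* AR(c): vertices the transpositions (i,j), 1 <= i < j <= n+1 *)
definition ar_vert :: "nat \<Rightarrow> (nat \<times> nat) set" where
  "ar_vert n = {(i, j). 1 \<le> i \<and> i < j \<and> j \<le> Suc n}"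

definition ar_edge :: "(nat \<Rightarrow> nat) \<Rightarrow> nat \<times> nat \<Rightarrow> nat \<times> nat \<Rightarrow> bool" where
  "ar_edge c a b \<longleftrightarrow>
     (fst a < c (snd a) \<and> b = (fst a, c (snd a))) \<or> (c (fst a) < snd a \<and> b = (c (fst a), snd a))"

definition ar_k :: "nat \<Rightarrow> nat \<Rightarrow> (nat \<times> nat) set" where
  "ar_k n k = {(l, r) \<in> ar_vert n. l \<le> k \<and> k < r}"

(* box [l,r]: row index of l in L, column j with r = r_{q-j+1} *)
definition rep :: "nat \<Rightarrow> (nat \<Rightarrow> nat) \<Rightarrow> (nat \<times> nat \<Rightarrow> nat) \<Rightarrow> nat \<times> nat \<Rightarrow> nat" where
  "rep n c f a = (let l = fst a; r = snd a in
     if l \<in> Lset n c \<and> r \<in> Rset n c \<and> l < r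
     then f (card {x \<in> Lset n c. x \<le> l}, card {x \<in> Rset n c. r \<le> x}) else 0)"

definition RSK_lam_c :: "nat \<Rightarrow> (nat \<Rightarrow> nat) \<Rightarrow> (nat \<times> nat \<Rightarrow> nat) \<Rightarrow> nat \<times> nat \<Rightarrow> nat" where
  "RSK_lam_c n c f b = gk_part (ar_k n (box_k (lamc n c) b)) (ar_edge c) (rep n c f)
                         (box_delta (lamc n c) b)"

end

theory Submission
  imports Defs
begin

fun epath :: "('a \<Rightarrow> 'a \<Rightarrow> bool) \<Rightarrow> 'a list \<Rightarrow> bool" where
  "epath E [] = True"
| "epath E [x] = True"
| "epath E (x # y # r) = (E x y \<and> epath E (y # r))"

lemma epath_nth: "epath E p \<longleftrightarrow> (\<forall>i. Suc i < length p \<longrightarrow> E (p ! i) (p ! Suc i))"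
proof (induction E p rule: epath.induct)
  case (3 E x y r)
  show ?case
  proof
    assume "epath E (x # y # r)"
    then show "\<forall>i. Suc i < length (x # y # r) \<longrightarrow> E ((x # y # r) ! i) ((x # y # r) ! Suc i)"
      using 3 by (auto simp: less_Suc_eq_0_disj)
  next
    assume a: "\<forall>i. Suc i < length (x # y # r) \<longrightarrow> E ((x # y # r) ! i) ((x # y # r) ! Suc i)"
    have "E x y" using a[rule_format, of 0] by simp
    moreover have "\<forall>i. Suc i < length (y # r) \<longrightarrow> E ((y # r) ! i) ((y # r) ! Suc i)"
      using a by (metis Suc_less_eq length_Cons nth_Cons_Suc)
    ultimately show "epath E (x # y # r)" using 3 by simp
  qed
qed auto

lemma is_path_epath: "is_path V E p \<longleftrightarrow> p \<noteq> [] \<and> distinct p \<and> set p \<subseteq> V \<and> epath E p"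
  unfolding is_path_def epath_nth by simp

lemma epath_map: "epath E (map f xs) \<longleftrightarrow> epath (\<lambda>x y. E (f x) (f y)) xs"
  by (induction "\<lambda>x y. E (f x) (f y)" xs rule: epath.induct) auto

lemma epath_mono: "epath R xs \<Longrightarrow> (\<forall>x\<in>set xs. \<forall>y\<in>set xs. R x y \<longrightarrow> S x y) \<Longrightarrow> epath S xs"
  by (induction R xs rule: epath.induct) auto

lemma epath_dropWhile: "epath E xs \<Longrightarrow> epath E (dropWhile P xs)"
  by (induction E xs rule: epath.induct) auto

lemma epath_closed:
  assumes "epath E q" "set q \<subseteq> V" "q \<noteq> []" "hd q \<in> W"
    and "\<forall>x\<in>W. \<forall>y\<in>V. E x y \<longrightarrow> y \<in> W"
  shows "set q \<subseteq> W"
  using assms by (induction E q rule: epath.induct) auto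

lemma filter_path:
  assumes "epath E q" "set q \<subseteq> V" "\<forall>x\<in>W. \<forall>y\<in>V. E x y \<longrightarrow> y \<in> W"
  shows "filter (\<lambda>x. x \<in> W) q = dropWhile (\<lambda>x. x \<notin> W) q"
proof -
  let ?d = "dropWhile (\<lambda>x. x \<notin> W) q"
  have q: "q = takeWhile (\<lambda>x. x \<notin> W) q @ ?d" by simp
  have f1: "filter (\<lambda>x. x \<in> W) (takeWhile (\<lambda>x. x \<notin> W) q) = []"
    by (simp add: filter_empty_conv) (metis set_takeWhileD)
  have "set ?d \<subseteq> W"
  proof (cases "?d = []")
    case False
    have h: "hd ?d \<in> W" using hd_dropWhile[OF False] by simp
    have e: "epath E ?d" using assms(1) by (rule epath_dropWhile)
    have s: "set ?d \<subseteq> V" using assms(2) set_dropWhileD by fastforce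
    show ?thesis by (rule epath_closed[OF e s False h assms(3)])
  next
    case True
    then show ?thesis by (metis empty_set empty_subsetI)
  qed
  then have fd: "filter (\<lambda>x. x \<in> W) ?d = ?d" by (auto simp: filter_id_conv)
  have "filter (\<lambda>x. x \<in> W) q = filter (\<lambda>x. x \<in> W) (takeWhile (\<lambda>x. x \<notin> W) q) @ filter (\<lambda>x. x \<in> W) ?d"
    by (metis filter_append takeWhile_dropWhile_id)
  then show ?thesis using f1 fd by simp
qed

lemma Max_le_Max:
  fixes A B :: "nat set"
  assumes "finite A" "finite B" "A \<noteq> {}" "\<forall>x\<in>A. \<exists>y\<in>B. x \<le> y"
  shows "Max A \<le> Max B"
proof -
  have "Max A \<in> A" using assms by simp
  then obtain y where "y \<in> B" "Max A \<le> y" using assms by blast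
  then show ?thesis using assms(2) by (meson Max_ge le_trans)
qed

definition fams :: "'a set \<Rightarrow> ('a \<Rightarrow> 'a \<Rightarrow> bool) \<Rightarrow> nat \<Rightarrow> 'a list list set" where
  "fams V E t = {ps. length ps = t \<and> (\<forall>p \<in> set ps. is_path V E p)}"

lemma gkM_fams: "gkM V E g t = Max ((\<lambda>ps. sum g (\<Union>p \<in> set ps. set p)) ` fams V E t)"
  unfolding gkM_def fams_def by (simp add: image_def) (meson)

lemma fams_finite:
  assumes "finite V" shows "finite (fams V E t)"
proof -
  let ?P = "{xs. set xs \<subseteq> V \<and> distinct xs}"
  have "finite ?P" using assms by (rule finite_subset_distinct)
  then have fin: "finite {ps. set ps \<subseteq> ?P \<and> length ps = t}" by (rule finite_lists_length_eq)
  have sub: "fams V E t \<subseteq> {ps. set ps \<subseteq> ?P \<and> length ps = t}"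
    unfolding fams_def is_path_def by auto
  show ?thesis by (rule finite_subset[OF sub fin])
qed

lemma fams_ne:
  assumes "v \<in> V" shows "replicate t [v] \<in> fams V E t"
  using assms unfolding fams_def is_path_def by auto


lemma gkM_le_transfer:
  fixes \<phi> :: "'a \<Rightarrow> 'b" and g1 :: "'a \<Rightarrow> nat" and g2 :: "'b \<Rightarrow> nat"
  assumes fin1: "finite V1" and fin2: "finite V2" and inj: "inj_on \<phi> V1" and sub: "\<phi> ` V1 \<subseteq> V2"
    and g: "\<forall>x\<in>V1. g2 (\<phi> x) = g1 x"
    and edge: "\<forall>x\<in>V1. \<forall>y\<in>V1. E1 x y \<longrightarrow> E2 (\<phi> x) (\<phi> y)"
    and ne: "V1 \<noteq> {}"
  shows "gkM V1 E1 g1 t \<le> gkM V2 E2 g2 t"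
  unfolding gkM_fams
proof (rule Max_le_Max)
  obtain v where v: "v \<in> V1" using ne by blast
  show "finite ((\<lambda>ps. sum g1 (\<Union>p\<in>set ps. set p)) ` fams V1 E1 t)" using fams_finite[OF fin1] by simp
  show "finite ((\<lambda>ps. sum g2 (\<Union>p\<in>set ps. set p)) ` fams V2 E2 t)" using fams_finite[OF fin2] by simp
  show "(\<lambda>ps. sum g1 (\<Union>p\<in>set ps. set p)) ` fams V1 E1 t \<noteq> {}" using fams_ne[OF v] by blast
  show "\<forall>x\<in>(\<lambda>ps. sum g1 (\<Union>p\<in>set ps. set p)) ` fams V1 E1 t.
          \<exists>y\<in>(\<lambda>ps. sum g2 (\<Union>p\<in>set ps. set p)) ` fams V2 E2 t. x \<le> y"
  proof
    fix x assume "x \<in> (\<lambda>ps. sum g1 (\<Union>p\<in>set ps. set p)) ` fams V1 E1 t"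
    then obtain ps where ps: "ps \<in> fams V1 E1 t" "x = sum g1 (\<Union>p\<in>set ps. set p)" by blast
    let ?qs = "map (map \<phi>) ps"
    have pp: "\<And>p. p \<in> set ps \<Longrightarrow> is_path V1 E1 p" using ps unfolding fams_def by auto
    have "\<And>q. q \<in> set ?qs \<Longrightarrow> is_path V2 E2 q"
    proof -
      fix q assume "q \<in> set ?qs"
      then obtain p where p: "p \<in> set ps" "q = map \<phi> p" by auto
      have P: "p \<noteq> [] \<and> distinct p \<and> set p \<subseteq> V1 \<and> epath E1 p" using pp[OF p(1)] unfolding is_path_epath .
      have d: "distinct q" unfolding p(2) using P inj by (simp add: distinct_map inj_on_subset)
      have s: "set q \<subseteq> V2" unfolding p(2) using P sub by auto
      have ee: "\<forall>a\<in>set p. \<forall>b\<in>set p. E1 a b \<longrightarrow> E2 (\<phi> a) (\<phi> b)" using P edge by blast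
      have e: "epath E2 q" unfolding p(2) epath_map
        by (rule epath_mono[OF _ ee]) (use P in simp)
      show "is_path V2 E2 q" unfolding is_path_epath using P p(2) d s e by simp
    qed
    then have qs: "?qs \<in> fams V2 E2 t" using ps(1) unfolding fams_def by simp
    have U: "(\<Union>q\<in>set ?qs. set q) = \<phi> ` (\<Union>p\<in>set ps. set p)" by (simp add: image_UN)
    have US: "(\<Union>p\<in>set ps. set p) \<subseteq> V1" using pp unfolding is_path_def by blast
    have "sum g2 (\<phi> ` (\<Union>p\<in>set ps. set p)) = sum (g2 \<circ> \<phi>) (\<Union>p\<in>set ps. set p)"
      by (rule sum.reindex) (rule inj_on_subset[OF inj US])
    also have "\<dots> = x" unfolding ps(2) using US g by (intro sum.cong) auto
    finally have "x = sum g2 (\<Union>q\<in>set ?qs. set q)" using U by simp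
    then show "\<exists>y\<in>(\<lambda>ps. sum g2 (\<Union>p\<in>set ps. set p)) ` fams V2 E2 t. x \<le> y" using qs by blast
  qed
qed

lemma gkM_ge_transfer:
  fixes \<phi> :: "'a \<Rightarrow> 'b" and g1 :: "'a \<Rightarrow> nat" and g2 :: "'b \<Rightarrow> nat"
  assumes fin1: "finite V1" and fin2: "finite V2" and inj: "inj_on \<phi> V1" and sub: "\<phi> ` V1 \<subseteq> V2"
    and g: "\<forall>x\<in>V1. g2 (\<phi> x) = g1 x"
    and zero: "\<forall>y\<in>V2. y \<notin> \<phi> ` V1 \<longrightarrow> g2 y = 0"
    and edge: "\<forall>x\<in>V1. \<forall>y\<in>V1. E2 (\<phi> x) (\<phi> y) \<longrightarrow> E1 x y"
    and clos: "\<forall>x\<in>\<phi> ` V1. \<forall>y\<in>V2. E2 x y \<longrightarrow> y \<in> \<phi> ` V1"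
    and ne: "V1 \<noteq> {}"
  shows "gkM V2 E2 g2 t \<le> gkM V1 E1 g1 t"
  unfolding gkM_fams
proof (rule Max_le_Max)
  obtain v where v: "v \<in> V1" using ne by blast
  have "\<phi> v \<in> V2" using v sub by auto
  then have "replicate t [\<phi> v] \<in> fams V2 E2 t" by (rule fams_ne)
  then show "(\<lambda>ps. sum g2 (\<Union>p\<in>set ps. set p)) ` fams V2 E2 t \<noteq> {}" by blast
  show "finite ((\<lambda>ps. sum g1 (\<Union>p\<in>set ps. set p)) ` fams V1 E1 t)" using fams_finite[OF fin1] by simp
  show "finite ((\<lambda>ps. sum g2 (\<Union>p\<in>set ps. set p)) ` fams V2 E2 t)" using fams_finite[OF fin2] by simp
  let ?W = "\<phi> ` V1"
  let ?\<psi> = "inv_into V1 \<phi>"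
  have psi1: "\<And>w. w \<in> ?W \<Longrightarrow> \<phi> (?\<psi> w) = w" by (simp add: f_inv_into_f)
  have psi2: "\<And>w. w \<in> ?W \<Longrightarrow> ?\<psi> w \<in> V1" by (simp add: inv_into_into)
  have psiinj: "inj_on ?\<psi> ?W" by (rule inj_on_inv_into) simp
  define h where "h = (\<lambda>q. if filter (\<lambda>x. x \<in> ?W) q = [] then [v] else map ?\<psi> (filter (\<lambda>x. x \<in> ?W) q))"
  show "\<forall>x\<in>(\<lambda>ps. sum g2 (\<Union>p\<in>set ps. set p)) ` fams V2 E2 t.
          \<exists>y\<in>(\<lambda>ps. sum g1 (\<Union>p\<in>set ps. set p)) ` fams V1 E1 t. x \<le> y"
  proof
    fix x assume "x \<in> (\<lambda>ps. sum g2 (\<Union>p\<in>set ps. set p)) ` fams V2 E2 t"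
    then obtain qs where qs: "qs \<in> fams V2 E2 t" "x = sum g2 (\<Union>p\<in>set qs. set p)" by blast
    have qp: "\<And>q. q \<in> set qs \<Longrightarrow> is_path V2 E2 q" using qs(1) unfolding fams_def by blast
    let ?ps = "map h qs"
    have hp: "\<And>q. q \<in> set qs \<Longrightarrow> is_path V1 E1 (h q)"
    proof -
      fix q assume q: "q \<in> set qs"
      have Q: "q \<noteq> [] \<and> distinct q \<and> set q \<subseteq> V2 \<and> epath E2 q" using qp[OF q] unfolding is_path_epath .
      let ?f = "filter (\<lambda>x. x \<in> ?W) q"
      show "is_path V1 E1 (h q)"
      proof (cases "?f = []")
        case True
        then show ?thesis unfolding h_def using v by (simp add: is_path_def)
      next
        case False
        have fe: "?f = dropWhile (\<lambda>x. x \<notin> ?W) q" by (rule filter_path[of E2 q V2]) (use Q clos in auto)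
        have e: "epath E2 ?f" unfolding fe using Q by (simp add: epath_dropWhile)
        have sW: "set ?f \<subseteq> ?W" by auto
        have d: "distinct (map ?\<psi> ?f)" using Q sW psiinj by (simp add: distinct_map inj_on_subset)
        have s: "set (map ?\<psi> ?f) \<subseteq> V1" using sW psi2 by auto
        have e: "epath E1 (map ?\<psi> ?f)" unfolding epath_map
        proof (rule epath_mono[OF e], intro ballI impI)
          fix a b assume ab: "a \<in> set ?f" "b \<in> set ?f" "E2 a b"
          then have "E2 (\<phi> (?\<psi> a)) (\<phi> (?\<psi> b))" using psi1 sW by auto
          moreover have "?\<psi> a \<in> V1" "?\<psi> b \<in> V1" using psi2 ab sW by auto
          ultimately show "E1 (?\<psi> a) (?\<psi> b)" using edge by blast
        qed
        show ?thesis using False d s e unfolding h_def is_path_epath by simp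
      qed
    qed
    then have ps: "?ps \<in> fams V1 E1 t" using qs(1) unfolding fams_def by simp
    let ?U2 = "\<Union>p\<in>set qs. set p" and ?U1 = "\<Union>p\<in>set ?ps. set p"
    have U2V: "?U2 \<subseteq> V2" using qp unfolding is_path_def by blast
    have U1V: "?U1 \<subseteq> V1"
    proof
      fix y assume "y \<in> ?U1"
      then obtain q where "q \<in> set qs" "y \<in> set (h q)" by auto
      then show "y \<in> V1" using hp[of q] unfolding is_path_def by blast
    qed
    have "x = sum g2 (?U2 \<inter> ?W)"
      unfolding qs(2)
    proof (rule sum.mono_neutral_right)
      show "finite ?U2" using U2V fin2 finite_subset by blast
      show "?U2 \<inter> ?W \<subseteq> ?U2" by blast
      show "\<forall>i\<in>?U2 - ?U2 \<inter> ?W. g2 i = 0" using zero U2V by blast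
    qed
    also have "?U2 \<inter> ?W = \<phi> ` (?\<psi> ` (?U2 \<inter> ?W))"
    proof -
      have "\<phi> ` (?\<psi> ` (?U2 \<inter> ?W)) = (\<lambda>w. \<phi> (?\<psi> w)) ` (?U2 \<inter> ?W)" by (simp add: image_image)
      also have "\<dots> = (\<lambda>w. w) ` (?U2 \<inter> ?W)" by (rule image_cong) (simp_all add: psi1)
      finally show ?thesis by simp
    qed
    also have "sum g2 (\<phi> ` (?\<psi> ` (?U2 \<inter> ?W))) = sum (g2 \<circ> \<phi>) (?\<psi> ` (?U2 \<inter> ?W))"
      by (rule sum.reindex) (rule inj_on_subset[OF inj], use psi2 in blast)
    also have "\<dots> = sum g1 (?\<psi> ` (?U2 \<inter> ?W))" using psi2 g by (intro sum.cong) auto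
    also have "\<dots> \<le> sum g1 ?U1"
    proof (rule sum_mono2)
      show "finite ?U1" using U1V fin1 finite_subset by blast
      show "?\<psi> ` (?U2 \<inter> ?W) \<subseteq> ?U1"
      proof
        fix y assume "y \<in> ?\<psi> ` (?U2 \<inter> ?W)"
        then obtain w q where w: "y = ?\<psi> w" "w \<in> set q" "q \<in> set qs" "w \<in> ?W" by blast
        then have "w \<in> set (filter (\<lambda>x. x \<in> ?W) q)" by simp
        then have ne: "filter (\<lambda>x. x \<in> ?W) q \<noteq> []" by (metis empty_iff empty_set)
        have "h q = map ?\<psi> (filter (\<lambda>x. x \<in> ?W) q)" unfolding h_def using ne by simp
        then have "y \<in> set (h q)" using \<open>w \<in> set (filter (\<lambda>x. x \<in> ?W) q)\<close> w(1) by simp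
        then show "y \<in> ?U1" using w by auto
      qed
    qed auto
    finally show "\<exists>y\<in>(\<lambda>ps. sum g1 (\<Union>p\<in>set ps. set p)) ` fams V1 E1 t. x \<le> y" using ps by blast
  qed
qed


definition F :: "nat list \<Rightarrow> nat \<Rightarrow> nat" where
  "F xs = foldr (\<lambda>i g. transpose i (Suc i) \<circ> g) xs id"

lemma F_append: "F (xs @ ys) = F xs \<circ> F ys"
  by (induction xs) (auto simp: F_def)

lemma tcomm: "Suc a < N \<Longrightarrow> transpose a (Suc a) \<circ> transpose N (Suc N) = transpose N (Suc N) \<circ> transpose a (Suc a)"
  by (rule ext) (simp add: transpose_def)

lemma F_commute: "\<forall>i\<in>set ys. Suc i < N \<Longrightarrow> F ys \<circ> transpose N (Suc N) = transpose N (Suc N) \<circ> F ys"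
proof (induction ys)
  case Nil then show ?case by (simp add: F_def)
next
  case (Cons a ys)
  let ?T = "transpose N (Suc N)" and ?t = "transpose a (Suc a)"
  have IH: "F ys \<circ> ?T = ?T \<circ> F ys" by (rule Cons.IH) (use Cons.prems in simp)
  have tc: "?t \<circ> ?T = ?T \<circ> ?t" using Cons.prems tcomm by simp
  have "F (a # ys) \<circ> ?T = ?t \<circ> (F ys \<circ> ?T)" by (simp add: F_def comp_assoc)
  also have "\<dots> = (?t \<circ> ?T) \<circ> F ys" using IH by (simp add: comp_assoc)
  also have "\<dots> = ?T \<circ> (?t \<circ> F ys)" using tc by (simp add: comp_assoc)
  also have "\<dots> = ?T \<circ> F (a # ys)" by (simp add: F_def)
  finally show ?case .
qed

definition cstruct :: "nat \<Rightarrow> (nat \<Rightarrow> nat) \<Rightarrow> (nat \<Rightarrow> nat) \<Rightarrow> nat \<Rightarrow> bool" where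
  "cstruct n c \<sigma> m \<longleftrightarrow> \<sigma> 0 = 1 \<and> 0 < m \<and> m \<le> n \<and> \<sigma> m = Suc n \<and>
     inj_on \<sigma> {0..n} \<and> \<sigma> ` {0..n} = {1..Suc n} \<and>
     (\<forall>s t. s < t \<and> t \<le> m \<longrightarrow> \<sigma> s < \<sigma> t) \<and>
     (\<forall>s t. m \<le> s \<and> s < t \<and> t \<le> n \<longrightarrow> \<sigma> t < \<sigma> s) \<and>
     (\<forall>t<n. c (\<sigma> t) = \<sigma> (Suc t)) \<and> c (\<sigma> n) = 1 \<and>
     c 0 = 0 \<and> (\<forall>x. Suc n < x \<longrightarrow> c x = x)"

lemma cstruct_base: "cstruct 1 (transpose 1 2) (\<lambda>t. Suc t) 1"
  unfolding cstruct_def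
  apply (intro conjI)
  apply (simp_all add: transpose_def)
  done

lemma cstructD:
  assumes "cstruct n c \<sigma> m"
  shows "\<sigma> 0 = 1" "0 < m" "m \<le> n" "\<sigma> m = Suc n" "inj_on \<sigma> {0..n}" "\<sigma> ` {0..n} = {1..Suc n}"
    "\<And>s t. s < t \<Longrightarrow> t \<le> m \<Longrightarrow> \<sigma> s < \<sigma> t"
    "\<And>s t. m \<le> s \<Longrightarrow> s < t \<Longrightarrow> t \<le> n \<Longrightarrow> \<sigma> t < \<sigma> s"
    "\<And>t. t < n \<Longrightarrow> c (\<sigma> t) = \<sigma> (Suc t)" "c (\<sigma> n) = 1"
    "c 0 = 0" "\<And>x. Suc n < x \<Longrightarrow> c x = x"
  using assms unfolding cstruct_def by simp_all

lemma ins_A: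
  assumes cs: "cstruct n c' \<sigma>' m'" and n1: "1 \<le> n"
  defines "\<sigma> \<equiv> (\<lambda>t. if t \<le> m' then \<sigma>' t else if t = Suc m' then Suc (Suc n) else \<sigma>' (t - 1))"
  shows "cstruct (Suc n) (c' \<circ> transpose (Suc n) (Suc (Suc n))) \<sigma> (Suc m')"
proof -
  let ?N = "Suc n"
  note C = cstructD[OF cs]
  have F1: "\<And>t. t \<le> n \<Longrightarrow> 1 \<le> \<sigma>' t \<and> \<sigma>' t \<le> ?N" using C(6) by (auto simp: image_subset_iff)
  have inc: "\<And>s t. s < t \<Longrightarrow> t \<le> m' \<Longrightarrow> \<sigma>' s < \<sigma>' t" using C by simp
  have dec: "\<And>s t. m' \<le> s \<Longrightarrow> s < t \<Longrightarrow> t \<le> n \<Longrightarrow> \<sigma>' t < \<sigma>' s" using C by simp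
  have inj: "\<And>s t. s \<le> n \<Longrightarrow> t \<le> n \<Longrightarrow> \<sigma>' s = \<sigma>' t \<Longrightarrow> s = t" using C(5) by (meson atLeastAtMost_iff inj_onD le0)
  have F2: "\<And>t. t \<le> n \<Longrightarrow> \<sigma>' t = ?N \<longleftrightarrow> t = m'" using inj C(3,4) by metis
  have cs': "\<And>t. t < n \<Longrightarrow> c' (\<sigma>' t) = \<sigma>' (Suc t)" using C by simp
  have cn: "c' (\<sigma>' n) = 1" using C by simp
  have fx: "\<And>x. x = 0 \<or> Suc n < x \<Longrightarrow> c' x = x" using C(11,12) by blast
  have mn: "0 < m'" "m' \<le> n" "\<sigma>' 0 = 1" "\<sigma>' m' = ?N" using C by auto
  have surj: "\<And>x. 1 \<le> x \<Longrightarrow> x \<le> ?N \<Longrightarrow> \<exists>t\<le>n. \<sigma>' t = x"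
  proof -
    fix x assume "1 \<le> x" "x \<le> ?N"
    then have "x \<in> \<sigma>' ` {0..n}" using C(6) by auto
    then show "\<exists>t\<le>n. \<sigma>' t = x" by auto
  qed
  have s2: "\<sigma> ` {0..Suc n} = {1..Suc ?N}"
  proof
    show "\<sigma> ` {0..Suc n} \<subseteq> {1..Suc ?N}"
    proof
      fix x assume "x \<in> \<sigma> ` {0..Suc n}"
      then obtain t where t: "t \<le> Suc n" "x = \<sigma> t" by auto
      have tn: "t - 1 \<le> n" using t by simp
      show "x \<in> {1..Suc ?N}" using F1[of t] F1[OF tn] mn t unfolding \<sigma>_def by auto
    qed
  next
    show "{1..Suc ?N} \<subseteq> \<sigma> ` {0..Suc n}"
    proof
      fix x assume x: "x \<in> {1..Suc ?N}"
      show "x \<in> \<sigma> ` {0..Suc n}"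
      proof (cases "x = Suc ?N")
        case True
        then have "\<sigma> (Suc m') = x" unfolding \<sigma>_def by simp
        then show ?thesis using mn by force
      next
        case False
        then obtain t where t: "t \<le> n" "\<sigma>' t = x" using surj x by force
        show ?thesis
        proof (cases "t \<le> m'")
          case True
          then have "\<sigma> t = x" using t unfolding \<sigma>_def by simp
          then show ?thesis using t by force
        next
          case False
          then have "\<sigma> (Suc t) = x" using t unfolding \<sigma>_def by simp
          then show ?thesis using t by force
        qed
      qed
    qed
  qed
  have s1: "inj_on \<sigma> {0..Suc n}"
    by (rule eq_card_imp_inj_on) (simp_all add: s2)
  have s3: "\<forall>s t. s < t \<and> t \<le> Suc m' \<longrightarrow> \<sigma> s < \<sigma> t"
  proof (intro allI impI)
    fix s t assume a: "s < t \<and> t \<le> Suc m'"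
    show "\<sigma> s < \<sigma> t"
    proof (cases "t \<le> m'")
      case True
      then show ?thesis using a inc[of s t] unfolding \<sigma>_def by simp
    next
      case False
      then have "t = Suc m'" "s \<le> m'" using a by auto
      then show ?thesis using F1[of s] mn unfolding \<sigma>_def by simp
    qed
  qed
  have s4: "\<forall>s t. Suc m' \<le> s \<and> s < t \<and> t \<le> Suc n \<longrightarrow> \<sigma> t < \<sigma> s"
  proof (intro allI impI)
    fix s t assume a: "Suc m' \<le> s \<and> s < t \<and> t \<le> Suc n"
    show "\<sigma> t < \<sigma> s"
    proof (cases "s = Suc m'")
      case True
      have tn: "t - 1 \<le> n" using a by auto
      show ?thesis using True a F1[OF tn] unfolding \<sigma>_def by auto
    next
      case False
      then show ?thesis using a dec[of "s - 1" "t - 1"] unfolding \<sigma>_def by auto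
    qed
  qed
  let ?c = "c' \<circ> transpose (Suc n) (Suc (Suc n))"
  have s5: "\<forall>t<Suc n. ?c (\<sigma> t) = \<sigma> (Suc t)"
  proof (intro allI impI)
    fix t assume t: "t < Suc n"
    consider "t < m'" | "t = m'" | "t = Suc m'" | "Suc m' < t" by linarith
    then show "?c (\<sigma> t) = \<sigma> (Suc t)"
    proof cases
      case 1
      then have "\<sigma>' t < ?N" using inc[of t m'] mn by simp
      then show ?thesis using 1 cs'[of t] mn unfolding \<sigma>_def by simp
    next
      case 2
      then show ?thesis using fx[of "Suc ?N"] mn unfolding \<sigma>_def by simp
    next
      case 3
      then show ?thesis using t cs'[of m'] mn unfolding \<sigma>_def by simp
    next
      case 4
      have "\<sigma>' (t - 1) \<noteq> ?N" using F2[of "t - 1"] 4 t by simp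
      moreover have "\<sigma>' (t - 1) \<le> ?N" using F1[of "t - 1"] t by simp
      ultimately show ?thesis using 4 t cs'[of "t - 1"] mn unfolding \<sigma>_def by simp
    qed
  qed
  have s6: "?c (\<sigma> (Suc n)) = 1"
  proof (cases "m' = n")
    case True
    then show ?thesis using cn mn unfolding \<sigma>_def by simp
  next
    case False
    have "\<sigma>' n \<noteq> ?N" using F2[of n] False by simp
    moreover have "\<sigma>' n \<le> ?N" using F1[of n] by simp
    ultimately show ?thesis using False cn mn unfolding \<sigma>_def by simp
  qed
  have s7: "?c 0 = 0 \<and> (\<forall>x. Suc (Suc n) < x \<longrightarrow> ?c x = x)"
    using fx by (auto simp: transpose_def)
  show ?thesis unfolding cstruct_def
    using s1 s2 s3 s4 s5 s6 s7 mn unfolding \<sigma>_def by auto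
qed


lemma ins_B:
  assumes cs: "cstruct n c' \<sigma>' m'" and n1: "1 \<le> n"
  defines "\<sigma> \<equiv> (\<lambda>t. if t < m' then \<sigma>' t else if t = m' then Suc (Suc n) else \<sigma>' (t - 1))"
  shows "cstruct (Suc n) (transpose (Suc n) (Suc (Suc n)) \<circ> c') \<sigma> m'"
proof -
  let ?N = "Suc n"
  note C = cstructD[OF cs]
  have F1: "\<And>t. t \<le> n \<Longrightarrow> 1 \<le> \<sigma>' t \<and> \<sigma>' t \<le> ?N" using C(6) by (auto simp: image_subset_iff)
  have inc: "\<And>s t. s < t \<Longrightarrow> t \<le> m' \<Longrightarrow> \<sigma>' s < \<sigma>' t" using C by simp
  have dec: "\<And>s t. m' \<le> s \<Longrightarrow> s < t \<Longrightarrow> t \<le> n \<Longrightarrow> \<sigma>' t < \<sigma>' s" using C by simp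
  have inj: "\<And>s t. s \<le> n \<Longrightarrow> t \<le> n \<Longrightarrow> \<sigma>' s = \<sigma>' t \<Longrightarrow> s = t" using C(5) by (meson atLeastAtMost_iff inj_onD le0)
  have F2: "\<And>t. t \<le> n \<Longrightarrow> \<sigma>' t = ?N \<longleftrightarrow> t = m'" using inj C(3,4) by metis
  have cs': "\<And>t. t < n \<Longrightarrow> c' (\<sigma>' t) = \<sigma>' (Suc t)" using C by simp
  have cn: "c' (\<sigma>' n) = 1" using C by simp
  have fx: "\<And>x. x = 0 \<or> Suc n < x \<Longrightarrow> c' x = x" using C(11,12) by blast
  have mn: "0 < m'" "m' \<le> n" "\<sigma>' 0 = 1" "\<sigma>' m' = ?N" using C by auto
  have surj: "\<And>x. 1 \<le> x \<Longrightarrow> x \<le> ?N \<Longrightarrow> \<exists>t\<le>n. \<sigma>' t = x"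
  proof -
    fix x assume "1 \<le> x" "x \<le> ?N"
    then have "x \<in> \<sigma>' ` {0..n}" using C(6) by auto
    then show "\<exists>t\<le>n. \<sigma>' t = x" by auto
  qed
  have s2: "\<sigma> ` {0..Suc n} = {1..Suc ?N}"
  proof
    show "\<sigma> ` {0..Suc n} \<subseteq> {1..Suc ?N}"
    proof
      fix x assume "x \<in> \<sigma> ` {0..Suc n}"
      then obtain t where t: "t \<le> Suc n" "x = \<sigma> t" by auto
      have tn: "t - 1 \<le> n" using t by simp
      show "x \<in> {1..Suc ?N}" using F1[of t] F1[OF tn] mn t unfolding \<sigma>_def by auto
    qed
  next
    show "{1..Suc ?N} \<subseteq> \<sigma> ` {0..Suc n}"
    proof
      fix x assume x: "x \<in> {1..Suc ?N}"
      show "x \<in> \<sigma> ` {0..Suc n}"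
      proof (cases "x = Suc ?N")
        case True
        then have "\<sigma> m' = x" unfolding \<sigma>_def by simp
        then show ?thesis using mn by force
      next
        case False
        then obtain t where t: "t \<le> n" "\<sigma>' t = x" using surj x by force
        show ?thesis
        proof (cases "t < m'")
          case True
          then have "\<sigma> t = x" using t unfolding \<sigma>_def by simp
          then show ?thesis using t by force
        next
          case False
          then have "\<sigma> (Suc t) = x" using t unfolding \<sigma>_def by simp
          then show ?thesis using t by force
        qed
      qed
    qed
  qed
  have s1: "inj_on \<sigma> {0..Suc n}"
    by (rule eq_card_imp_inj_on) (simp_all add: s2)
  have s3: "\<forall>s t. s < t \<and> t \<le> m' \<longrightarrow> \<sigma> s < \<sigma> t"
  proof (intro allI impI)
    fix s t assume a: "s < t \<and> t \<le> m'"
    show "\<sigma> s < \<sigma> t"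
    proof (cases "t < m'")
      case True
      then show ?thesis using a inc[of s t] unfolding \<sigma>_def by simp
    next
      case False
      then have "t = m'" "s < m'" using a by auto
      then show ?thesis using F1[of s] mn unfolding \<sigma>_def by simp
    qed
  qed
  have s4: "\<forall>s t. m' \<le> s \<and> s < t \<and> t \<le> Suc n \<longrightarrow> \<sigma> t < \<sigma> s"
  proof (intro allI impI)
    fix s t assume a: "m' \<le> s \<and> s < t \<and> t \<le> Suc n"
    show "\<sigma> t < \<sigma> s"
    proof (cases "s = m'")
      case True
      have tn: "t - 1 \<le> n" using a by auto
      show ?thesis using True a F1[OF tn] unfolding \<sigma>_def by auto
    next
      case False
      then show ?thesis using a dec[of "s - 1" "t - 1"] unfolding \<sigma>_def by auto
    qed
  qed
  let ?c = "transpose (Suc n) (Suc (Suc n)) \<circ> c'"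
  have s5: "\<forall>t<Suc n. ?c (\<sigma> t) = \<sigma> (Suc t)"
  proof (intro allI impI)
    fix t assume t: "t < Suc n"
    consider "Suc t < m'" | "Suc t = m'" | "t = m'" | "m' < t" by linarith
    then show "?c (\<sigma> t) = \<sigma> (Suc t)"
    proof cases
      case 1
      then have "\<sigma>' (Suc t) < ?N" using inc[of "Suc t" m'] mn by simp
      then show ?thesis using 1 cs'[of t] mn unfolding \<sigma>_def by simp
    next
      case 2
      then show ?thesis using cs'[of t] mn unfolding \<sigma>_def by simp
    next
      case 3
      then show ?thesis using fx[of "Suc ?N"] mn unfolding \<sigma>_def by simp
    next
      case 4
      have "\<sigma>' t \<noteq> ?N" using F2[of t] 4 t by simp
      moreover have "\<sigma>' t \<le> ?N" using F1[of t] t by simp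
      ultimately show ?thesis using 4 t cs'[of "t - 1"] mn unfolding \<sigma>_def by simp
    qed
  qed
  have s6: "?c (\<sigma> (Suc n)) = 1"
    using cn mn n1 unfolding \<sigma>_def by simp
  have s7: "?c 0 = 0 \<and> (\<forall>x. Suc (Suc n) < x \<longrightarrow> ?c x = x)"
    using fx by (auto simp: transpose_def)
  show ?thesis unfolding cstruct_def
    using s1 s2 s3 s4 s5 s6 s7 mn unfolding \<sigma>_def by auto
qed

lemma cox_struct_aux: "1 \<le> n \<Longrightarrow> distinct xs \<Longrightarrow> set xs = {1..n} \<Longrightarrow> \<exists>\<sigma> m. cstruct n (F xs) \<sigma> m"
proof (induction n arbitrary: xs rule: nat_induct_at_least)
  case base
  then have "xs = [1]"
  proof -
    have "length xs = 1" using base distinct_card[of xs] by simp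
    then obtain x where "xs = [x]" by (metis One_nat_def length_0_conv length_Suc_conv)
    then show ?thesis using base by simp
  qed
  then have "F xs = transpose 1 2" by (simp add: F_def numeral_2_eq_2)
  then show ?case using cstruct_base by metis
next
  case (Suc n)
  let ?N = "Suc n"
  have "?N \<in> set xs" using Suc.prems by simp
  then obtain ys zs where xs: "xs = ys @ ?N # zs" by (meson split_list)
  have d: "distinct (ys @ zs)" "?N \<notin> set ys" "?N \<notin> set zs" using Suc.prems xs by auto
  have st: "set (ys @ zs) = {1..n}"
  proof -
    have "set (ys @ zs) = set xs - {?N}" using xs d by auto
    also have "\<dots> = {1..Suc n} - {Suc n}" using Suc.prems by simp
    also have "\<dots> = {1..n}" by auto
    finally show ?thesis .
  qed
  obtain \<sigma>' m' where cs: "cstruct n (F (ys @ zs)) \<sigma>' m'" using Suc.IH[OF d(1) st] by blast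
  have FN: "F (?N # zs) = transpose ?N (Suc ?N) \<circ> F zs" by (simp add: F_def)
  have Fxs: "F xs = F ys \<circ> transpose ?N (Suc ?N) \<circ> F zs" using xs F_append[of ys "?N # zs"] FN by (simp add: comp_assoc)
  have "n \<in> set (ys @ zs)" using st Suc.hyps by simp
  then consider "n \<in> set ys" | "n \<in> set zs" by auto
  then show ?case
  proof cases
    case 1
    then have "n \<notin> set zs" using d(1) by auto
    then have "\<forall>i\<in>set zs. Suc i < ?N"
    proof (intro ballI)
      fix i assume "n \<notin> set zs" "i \<in> set zs"
      moreover have "i \<in> {1..n}" using st \<open>i \<in> set zs\<close> by auto
      ultimately show "Suc i < ?N" by (cases "i = n") auto
    qed
    then have "F zs \<circ> transpose ?N (Suc ?N) = transpose ?N (Suc ?N) \<circ> F zs" by (rule F_commute)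
    then have "F xs = F (ys @ zs) \<circ> transpose ?N (Suc ?N)" using Fxs by (simp add: F_append comp_assoc)
    then show ?thesis using ins_A[OF cs Suc.hyps] by metis
  next
    case 2
    then have "n \<notin> set ys" using d(1) by auto
    then have "\<forall>i\<in>set ys. Suc i < ?N"
    proof (intro ballI)
      fix i assume "n \<notin> set ys" "i \<in> set ys"
      moreover have "i \<in> {1..n}" using st \<open>i \<in> set ys\<close> by auto
      ultimately show "Suc i < ?N" by (cases "i = n") auto
    qed
    then have "F ys \<circ> transpose ?N (Suc ?N) = transpose ?N (Suc ?N) \<circ> F ys" by (rule F_commute)
    then have "F xs = transpose ?N (Suc ?N) \<circ> F (ys @ zs)" using Fxs by (simp add: F_append comp_assoc)
    then show ?thesis using ins_B[OF cs Suc.hyps] by metis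
  qed
qed

lemma cox_struct: "1 \<le> n \<Longrightarrow> coxeter n c \<Longrightarrow> \<exists>\<sigma> m. cstruct n c \<sigma> m"
  unfolding coxeter_def using cox_struct_aux F_def by metis


locale cx =
  fixes n :: nat and c :: "nat \<Rightarrow> nat" and \<sigma> :: "nat \<Rightarrow> nat" and m :: nat
  assumes cs: "cstruct n c \<sigma> m" and n1: "1 \<le> n"
begin

lemma s0: "\<sigma> 0 = 1" and m0: "0 < m" and mn: "m \<le> n" and sm: "\<sigma> m = Suc n"
  using cs unfolding cstruct_def by simp_all

lemma sinj: "s \<le> n \<Longrightarrow> t \<le> n \<Longrightarrow> \<sigma> s = \<sigma> t \<Longrightarrow> s = t"
  using cs unfolding cstruct_def by (meson atLeastAtMost_iff inj_onD le0)

lemma simg: "\<sigma> ` {0..n} = {1..Suc n}"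
  using cs unfolding cstruct_def by simp

lemma srange: "t \<le> n \<Longrightarrow> 1 \<le> \<sigma> t \<and> \<sigma> t \<le> Suc n"
  using simg by (auto simp: image_subset_iff)

lemma ssurj: "1 \<le> x \<Longrightarrow> x \<le> Suc n \<Longrightarrow> \<exists>t\<le>n. \<sigma> t = x"
proof -
  assume "1 \<le> x" "x \<le> Suc n"
  then have "x \<in> \<sigma> ` {0..n}" using simg by auto
  then show ?thesis by auto
qed

lemma inc: "s < t \<Longrightarrow> t \<le> m \<Longrightarrow> \<sigma> s < \<sigma> t"
  using cs unfolding cstruct_def by simp

lemma dec: "m \<le> s \<Longrightarrow> s < t \<Longrightarrow> t \<le> n \<Longrightarrow> \<sigma> t < \<sigma> s"
  using cs unfolding cstruct_def by simp

lemma cstep: "t < n \<Longrightarrow> c (\<sigma> t) = \<sigma> (Suc t)"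
  using cs unfolding cstruct_def by simp

lemma clast: "c (\<sigma> n) = 1"
  using cs unfolding cstruct_def by simp

lemma inc_iff: assumes "s \<le> m" "t \<le> m" shows "\<sigma> s \<le> \<sigma> t \<longleftrightarrow> s \<le> t"
proof
  assume "\<sigma> s \<le> \<sigma> t" then show "s \<le> t" using inc[of t s] assms by (cases "t < s") auto
next
  assume "s \<le> t" then show "\<sigma> s \<le> \<sigma> t" using inc[of s t] assms by (cases "s < t") auto
qed

lemma dec_iff: assumes "m \<le> s" "s \<le> n" "m \<le> t" "t \<le> n" shows "\<sigma> s \<le> \<sigma> t \<longleftrightarrow> t \<le> s"
proof
  assume "\<sigma> s \<le> \<sigma> t" then show "t \<le> s" using dec[of s t] assms by (cases "s < t") auto
next
  assume "t \<le> s" then show "\<sigma> s \<le> \<sigma> t" using dec[of t s] assms by (cases "t < s") auto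
qed

lemma pow: "j \<le> n \<Longrightarrow> (c ^^ j) 1 = \<sigma> j"
proof (induction j)
  case 0 then show ?case using s0 by simp
next
  case (Suc j) then show ?case using cstep[of j] by simp
qed

lemma midx: "m_idx n c = m"
  unfolding m_idx_def
proof (rule Least_equality)
  show "(c ^^ m) 1 = Suc n" using pow[OF mn] sm by simp
next
  fix y assume y: "(c ^^ y) 1 = Suc n"
  show "m \<le> y"
  proof (cases "y \<le> n")
    case True
    then have "\<sigma> y = \<sigma> m" using pow y sm by simp
    then show ?thesis using sinj[of y m] True mn by simp
  next
    case False then show ?thesis using mn by simp
  qed
qed

lemma Lset_eq: "Lset n c = \<sigma> ` {0..<m}"
proof -
  have "Lset n c = {(c ^^ j) 1 | j. j < m}" unfolding Lset_def midx ..
  also have "\<dots> = {\<sigma> j | j. j < m}"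
  proof -
    have h: "\<And>j. j < m \<Longrightarrow> (c ^^ j) 1 = \<sigma> j" using pow mn by simp
    show ?thesis by (intro Collect_cong ex_cong1) (use h in auto)
  qed
  also have "\<dots> = \<sigma> ` {0..<m}" by auto
  finally show ?thesis .
qed

lemma Rset_eq: "Rset n c = \<sigma> ` {m..n}"
proof -
  have "Rset n c = {(c ^^ j) 1 | j. m \<le> j \<and> j \<le> n}" unfolding Rset_def midx ..
  also have "\<dots> = {\<sigma> j | j. m \<le> j \<and> j \<le> n}"
  proof -
    have h: "\<And>j. j \<le> n \<Longrightarrow> (c ^^ j) 1 = \<sigma> j" using pow by simp
    show ?thesis by (intro Collect_cong ex_cong1) (use h in auto)
  qed
  also have "\<dots> = \<sigma> ` {m..n}" by auto
  finally show ?thesis .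
qed

lemma sinj_on: "A \<subseteq> {0..n} \<Longrightarrow> inj_on \<sigma> A"
  by (meson atLeastAtMost_iff inj_onI sinj subsetD)

lemma card_img: "A \<subseteq> {0..n} \<Longrightarrow> card (\<sigma> ` A) = card A"
  by (rule card_image) (rule sinj_on)

lemma cardL: "card (Lset n c) = m"
  unfolding Lset_eq using mn by (subst card_img) auto

lemma sorted_L: "sorted_list_of_set (\<sigma> ` {0..<m}) = map \<sigma> [0..<m]"
proof -
  have "sorted_wrt (<) (map \<sigma> [0..<m])"
    unfolding sorted_wrt_iff_nth_less using inc by simp
  moreover have "length (map \<sigma> [0..<m]) = card (\<sigma> ` {0..<m})" using mn by (subst card_img) auto
  ultimately show ?thesis
    using sorted_list_of_set_unique[of "\<sigma> ` {0..<m}" "map \<sigma> [0..<m]"] by simp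
qed

lemma ell_eq: "1 \<le> i \<Longrightarrow> i \<le> m \<Longrightarrow> ell n c i = \<sigma> (i - 1)"
  unfolding ell_def Lset_eq sorted_L by simp

lemma lamc_eq: "1 \<le> i \<Longrightarrow> i \<le> m \<Longrightarrow> lamc n c i = card {t \<in> {m..n}. \<sigma> (i - 1) < \<sigma> t}"
proof -
  assume i: "1 \<le> i" "i \<le> m"
  have "lamc n c i = card {r \<in> \<sigma> ` {m..n}. \<sigma> (i - 1) < r}"
    unfolding lamc_def cardL using i ell_eq Rset_eq by simp
  also have "{r \<in> \<sigma> ` {m..n}. \<sigma> (i - 1) < r} = \<sigma> ` {t \<in> {m..n}. \<sigma> (i - 1) < \<sigma> t}" by auto
  also have "card \<dots> = card {t \<in> {m..n}. \<sigma> (i - 1) < \<sigma> t}" by (rule card_img) auto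
  finally show ?thesis .
qed

lemma lamc_out: "\<not> (1 \<le> i \<and> i \<le> m) \<Longrightarrow> lamc n c i = 0"
  unfolding lamc_def cardL by auto

lemma seg_card:
  assumes j: "1 \<le> j"
  shows "j \<le> card {t \<in> {m..n}. x < \<sigma> t} \<longleftrightarrow> m + j \<le> Suc n \<and> x < \<sigma> (m + j - 1)"
proof
  assume a: "j \<le> card {t \<in> {m..n}. x < \<sigma> t}"
  show "m + j \<le> Suc n \<and> x < \<sigma> (m + j - 1)"
  proof (rule ccontr)
    assume na: "\<not> (m + j \<le> Suc n \<and> x < \<sigma> (m + j - 1))"
    have "{t \<in> {m..n}. x < \<sigma> t} \<subseteq> {m..<m + j - 1}"
    proof
      fix t assume t: "t \<in> {t \<in> {m..n}. x < \<sigma> t}"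
      show "t \<in> {m..<m + j - 1}"
      proof (rule ccontr)
        assume "t \<notin> {m..<m + j - 1}"
        then have tt: "m + j - 1 \<le> t" using t by auto
        then have "m + j \<le> Suc n" using t j by auto
        moreover have "\<sigma> t \<le> \<sigma> (m + j - 1)" using dec_iff[of t "m + j - 1"] tt t j by auto
        ultimately show False using na t by auto
      qed
    qed
    then have "card {t \<in> {m..n}. x < \<sigma> t} \<le> card {m..<m + j - 1}" by (intro card_mono) auto
    then have "card {t \<in> {m..n}. x < \<sigma> t} \<le> j - 1" by simp
    then show False using a j by simp
  qed
next
  assume a: "m + j \<le> Suc n \<and> x < \<sigma> (m + j - 1)"
  have "{m..m + j - 1} \<subseteq> {t \<in> {m..n}. x < \<sigma> t}"
  proof
    fix t assume t: "t \<in> {m..m + j - 1}"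
    then have "\<sigma> (m + j - 1) \<le> \<sigma> t" using dec_iff[of "m + j - 1" t] a j by auto
    then show "t \<in> {t \<in> {m..n}. x < \<sigma> t}" using a t by auto
  qed
  then have "card {m..m + j - 1} \<le> card {t \<in> {m..n}. x < \<sigma> t}" by (intro card_mono) auto
  then show "j \<le> card {t \<in> {m..n}. x < \<sigma> t}" using j by simp
qed

lemma Fer_iff: "(i, j) \<in> Fer (lamc n c) \<longleftrightarrow>
   1 \<le> i \<and> i \<le> m \<and> 1 \<le> j \<and> m + j \<le> Suc n \<and> \<sigma> (i - 1) < \<sigma> (m + j - 1)"
proof (cases "1 \<le> i \<and> i \<le> m")
  case True
  then show ?thesis unfolding Fer_def using lamc_eq[of i] seg_card[of j "\<sigma> (i - 1)"] by auto
next
  case False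
  then show ?thesis unfolding Fer_def using lamc_out by auto
qed

lemma lam1: "lamc n c 1 = Suc n - m"
proof -
  have "{t \<in> {m..n}. \<sigma> (1 - 1) < \<sigma> t} = {m..n}"
  proof -
    have "\<And>t. t \<in> {m..n} \<Longrightarrow> 1 < \<sigma> t"
    proof -
      fix t assume t: "t \<in> {m..n}"
      have "\<sigma> t \<noteq> \<sigma> 0" using sinj[of t 0] t m0 by auto
      then show "1 < \<sigma> t" using srange[of t] t s0 by auto
    qed
    then show ?thesis using s0 by auto
  qed
  then show ?thesis using lamc_eq[of 1] m0 by simp
qed

lemma cnt: assumes "k \<le> Suc n" shows "card {t \<in> {0..n}. \<sigma> t \<le> k} = k"
proof -
  have "\<sigma> ` {t \<in> {0..n}. \<sigma> t \<le> k} = {1..k}"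
  proof
    show "\<sigma> ` {t \<in> {0..n}. \<sigma> t \<le> k} \<subseteq> {1..k}" using srange by auto
    show "{1..k} \<subseteq> \<sigma> ` {t \<in> {0..n}. \<sigma> t \<le> k}"
    proof
      fix x assume x: "x \<in> {1..k}"
      then obtain t where "t \<le> n" "\<sigma> t = x" using ssurj[of x] assms by auto
      then show "x \<in> \<sigma> ` {t \<in> {0..n}. \<sigma> t \<le> k}" using x by force
    qed
  qed
  moreover have "card (\<sigma> ` {t \<in> {0..n}. \<sigma> t \<le> k}) = card {t \<in> {0..n}. \<sigma> t \<le> k}"
    by (rule card_img) auto
  ultimately show ?thesis by simp
qed

lemma card_two: "a < b \<Longrightarrow> b \<le> n \<Longrightarrow> card ({0..a} \<union> {Suc b..n}) = Suc a + (n - b)"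
  by (subst card_Un_disjoint) auto

lemma diag_bounds:
  assumes a: "a < m" and b: "m \<le> b" "b \<le> n" and ab: "\<sigma> a < \<sigma> b"
  shows "\<sigma> a \<le> Suc n + a - b" "Suc n + a - b < \<sigma> b"
proof -
  have ab': "a < b" using a b by simp
  have sa: "\<sigma> a \<le> Suc n" using srange[of a] a mn by simp
  have "{t \<in> {0..n}. \<sigma> t \<le> \<sigma> a} \<subseteq> {0..a} \<union> {Suc b..n}"
  proof
    fix t assume t: "t \<in> {t \<in> {0..n}. \<sigma> t \<le> \<sigma> a}"
    show "t \<in> {0..a} \<union> {Suc b..n}"
    proof (cases "t < m")
      case True
      then have "t \<le> a" using inc_iff[of t a] t a by auto
      then show ?thesis by simp
    next
      case False
      have "\<not> t \<le> b"
      proof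
        assume "t \<le> b"
        then have "\<sigma> b \<le> \<sigma> t" using dec_iff[of b t] False b t by auto
        then show False using t ab by auto
      qed
      then show ?thesis using t by auto
    qed
  qed
  then have "card {t \<in> {0..n}. \<sigma> t \<le> \<sigma> a} \<le> card ({0..a} \<union> {Suc b..n})" by (intro card_mono) auto
  then show "\<sigma> a \<le> Suc n + a - b" using cnt[OF sa] card_two[OF ab' b(2)] b by simp
next
  have ab': "a < b" using a b by simp
  have sb: "\<sigma> b - 1 \<le> Suc n" using srange[of b] b by arith
  have "{0..a} \<union> {Suc b..n} \<subseteq> {t \<in> {0..n}. \<sigma> t \<le> \<sigma> b - 1}"
  proof
    fix t assume t: "t \<in> {0..a} \<union> {Suc b..n}"
    show "t \<in> {t \<in> {0..n}. \<sigma> t \<le> \<sigma> b - 1}"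
    proof (cases "t \<le> a")
      case True
      then have "\<sigma> t \<le> \<sigma> a" using inc_iff[of t a] a by auto
      then show ?thesis using True ab a mn by auto
    next
      case False
      then have "b < t" "t \<le> n" using t by auto
      then have "\<sigma> t < \<sigma> b" using dec[of b t] b by auto
      then show ?thesis using \<open>t \<le> n\<close> by auto
    qed
  qed
  then have "card ({0..a} \<union> {Suc b..n}) \<le> card {t \<in> {0..n}. \<sigma> t \<le> \<sigma> b - 1}" by (intro card_mono) auto
  then show "Suc n + a - b < \<sigma> b" using cnt[OF sb] card_two[OF ab' b(2)] b ab by simp
qed

lemma corner:
  assumes a: "a < m" and b: "m \<le> b" "b \<le> n" and k: "\<sigma> a \<le> k" "k < \<sigma> b"
  shows "\<exists>a' b'. a \<le> a' \<and> a' < m \<and> b \<le> b' \<and> b' \<le> n \<and> \<sigma> a' \<le> k \<and> k < \<sigma> b' \<and> k = Suc n + a' - b'"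
proof -
  define A where "A = {t. t < m \<and> \<sigma> t \<le> k}"
  define B where "B = {t. m \<le> t \<and> t \<le> n \<and> k < \<sigma> t}"
  have fA: "finite A" unfolding A_def by simp
  have fB: "finite B" unfolding B_def by simp
  have aA: "a \<in> A" unfolding A_def using a k by simp
  have bB: "b \<in> B" unfolding B_def using b k by simp
  define a' where "a' = Max A"
  define b' where "b' = Max B"
  have a'A: "a' \<in> A" unfolding a'_def using fA aA Max_in by blast
  have b'B: "b' \<in> B" unfolding b'_def using fB bB Max_in by blast
  have aa: "a \<le> a'" unfolding a'_def using fA aA by simp
  have bb: "b \<le> b'" unfolding b'_def using fB bB by simp
  have A1: "a' < m" "\<sigma> a' \<le> k" using a'A unfolding A_def by auto
  have B1: "m \<le> b'" "b' \<le> n" "k < \<sigma> b'" using b'B unfolding B_def by auto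
  have ab': "a' < b'" using A1 B1 by simp
  have "{t \<in> {0..n}. \<sigma> t \<le> k} = {0..a'} \<union> {Suc b'..n}"
  proof
    show "{t \<in> {0..n}. \<sigma> t \<le> k} \<subseteq> {0..a'} \<union> {Suc b'..n}"
    proof
      fix t assume t: "t \<in> {t \<in> {0..n}. \<sigma> t \<le> k}"
      show "t \<in> {0..a'} \<union> {Suc b'..n}"
      proof (cases "t < m")
        case True
        then have "t \<in> A" unfolding A_def using t by simp
        then have "t \<le> a'" unfolding a'_def using fA by simp
        then show ?thesis by simp
      next
        case False
        have "\<not> t \<le> b'"
        proof
          assume "t \<le> b'"
          then have "\<sigma> b' \<le> \<sigma> t" using dec_iff[of b' t] False B1 t by auto
          then show False using t B1 by auto
        qed
        then show ?thesis using t by auto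
      qed
    qed
  next
    show "{0..a'} \<union> {Suc b'..n} \<subseteq> {t \<in> {0..n}. \<sigma> t \<le> k}"
    proof
      fix t assume t: "t \<in> {0..a'} \<union> {Suc b'..n}"
      show "t \<in> {t \<in> {0..n}. \<sigma> t \<le> k}"
      proof (cases "t \<le> a'")
        case True
        then have "\<sigma> t \<le> \<sigma> a'" using inc_iff[of t a'] A1 by auto
        then show ?thesis using True A1 mn by auto
      next
        case False
        then have tb: "b' < t" "t \<le> n" using t by auto
        have "\<not> k < \<sigma> t"
        proof
          assume "k < \<sigma> t"
          then have "t \<in> B" unfolding B_def using tb B1 by simp
          then have "t \<le> b'" unfolding b'_def using fB by simp
          then show False using tb by simp
        qed
        then show ?thesis using tb by auto
      qed
    qed
  qed
  then have "k = Suc a' + (n - b')" using cnt[of k] card_two[OF ab' B1(2)] k srange[of b] b by simp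
  then have "k = Suc n + a' - b'" using B1 by simp
  then show ?thesis using aa bb A1 B1 by blast
qed

lemma sq_iff: "(i, j) \<in> sq (lamc n c) k \<longleftrightarrow>
   (i, j) \<in> Fer (lamc n c) \<and> \<sigma> (i - 1) \<le> k \<and> k < \<sigma> (m + j - 1)"
proof
  assume "(i, j) \<in> sq (lamc n c) k"
  then obtain i' j' where ij: "(i, j) \<in> Fer (lamc n c)" "(i', j') \<in> Diag (lamc n c) k" "i \<le> i'" "j \<le> j'"
    unfolding sq_def by auto
  have F: "1 \<le> i" "i \<le> m" "1 \<le> j" "m + j \<le> Suc n" using ij(1) Fer_iff by auto
  have F': "1 \<le> i'" "i' \<le> m" "1 \<le> j'" "m + j' \<le> Suc n" "\<sigma> (i' - 1) < \<sigma> (m + j' - 1)"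
    using ij(2) Fer_iff unfolding Diag_def by auto
  have eq: "Suc n - m + i' = k + j'" using ij(2) lam1 unfolding Diag_def by simp
  have keq: "k = Suc n + (i' - 1) - (m + j' - 1)" using eq F' mn by simp
  have db: "\<sigma> (i' - 1) \<le> k" "k < \<sigma> (m + j' - 1)"
    using diag_bounds[of "i' - 1" "m + j' - 1"] F' keq by auto
  have "\<sigma> (i - 1) \<le> \<sigma> (i' - 1)" using inc_iff[of "i - 1" "i' - 1"] F F' ij by simp
  moreover have "\<sigma> (m + j' - 1) \<le> \<sigma> (m + j - 1)" using dec_iff[of "m + j' - 1" "m + j - 1"] F F' ij by simp
  ultimately show "(i, j) \<in> Fer (lamc n c) \<and> \<sigma> (i - 1) \<le> k \<and> k < \<sigma> (m + j - 1)" using ij db by simp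
next
  assume a: "(i, j) \<in> Fer (lamc n c) \<and> \<sigma> (i - 1) \<le> k \<and> k < \<sigma> (m + j - 1)"
  have F: "1 \<le> i" "i \<le> m" "1 \<le> j" "m + j \<le> Suc n" using a Fer_iff by auto
  obtain a' b' where c: "i - 1 \<le> a'" "a' < m" "m + j - 1 \<le> b'" "b' \<le> n" "\<sigma> a' \<le> k" "k < \<sigma> b'"
    "k = Suc n + a' - b'"
  proof -
    have ex: "\<exists>a' b'. i - 1 \<le> a' \<and> a' < m \<and> m + j - 1 \<le> b' \<and> b' \<le> n \<and> \<sigma> a' \<le> k \<and> k < \<sigma> b' \<and> k = Suc n + a' - b'"
      by (rule corner) (use F a in auto)
    show ?thesis using ex that by blast
  qed
  have "(Suc a', Suc b' - m) \<in> Fer (lamc n c)" unfolding Fer_iff using c F by simp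
  moreover have "lamc n c 1 + Suc a' = k + (Suc b' - m)" using c F lam1 mn by simp
  ultimately have "(Suc a', Suc b' - m) \<in> Diag (lamc n c) k" unfolding Diag_def by simp
  moreover have "i \<le> Suc a'" "j \<le> Suc b' - m" using c F by auto
  ultimately show "(i, j) \<in> sq (lamc n c) k" unfolding sq_def using a by force
qed

definition phi :: "nat \<times> nat \<Rightarrow> nat \<times> nat" where
  "phi b = (\<sigma> (fst b - 1), \<sigma> (m + snd b - 1))"

lemma rep_phi:
  assumes F: "(i, j) \<in> Fer (lamc n c)"
  shows "rep n c f (phi (i, j)) = f (i, j)"
proof -
  have F': "1 \<le> i" "i \<le> m" "1 \<le> j" "m + j \<le> Suc n" "\<sigma> (i - 1) < \<sigma> (m + j - 1)" using F Fer_iff by auto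
  have L: "\<sigma> (i - 1) \<in> Lset n c" unfolding Lset_eq using F' by auto
  have R: "\<sigma> (m + j - 1) \<in> Rset n c" unfolding Rset_eq using F' by (intro imageI) auto
  have "{x \<in> Lset n c. x \<le> \<sigma> (i - 1)} = \<sigma> ` {0..i - 1}"
  proof
    show "{x \<in> Lset n c. x \<le> \<sigma> (i - 1)} \<subseteq> \<sigma> ` {0..i - 1}"
    proof
      fix x assume "x \<in> {x \<in> Lset n c. x \<le> \<sigma> (i - 1)}"
      then obtain t where t: "t < m" "x = \<sigma> t" "\<sigma> t \<le> \<sigma> (i - 1)" unfolding Lset_eq by auto
      then have "t \<le> i - 1" using inc_iff[of t "i - 1"] F' by auto
      then show "x \<in> \<sigma> ` {0..i - 1}" using t by auto
    qed
    show "\<sigma> ` {0..i - 1} \<subseteq> {x \<in> Lset n c. x \<le> \<sigma> (i - 1)}"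
    proof
      fix x assume "x \<in> \<sigma> ` {0..i - 1}"
      then obtain t where t: "t \<le> i - 1" "x = \<sigma> t" by auto
      then have "\<sigma> t \<le> \<sigma> (i - 1)" using inc_iff[of t "i - 1"] F' by auto
      then show "x \<in> {x \<in> Lset n c. x \<le> \<sigma> (i - 1)}" unfolding Lset_eq using t F' by auto
    qed
  qed
  then have cL: "card {x \<in> Lset n c. x \<le> \<sigma> (i - 1)} = i" using F' mn by (simp add: card_img)
  have "{x \<in> Rset n c. \<sigma> (m + j - 1) \<le> x} = \<sigma> ` {m..m + j - 1}"
  proof
    show "{x \<in> Rset n c. \<sigma> (m + j - 1) \<le> x} \<subseteq> \<sigma> ` {m..m + j - 1}"
    proof
      fix x assume "x \<in> {x \<in> Rset n c. \<sigma> (m + j - 1) \<le> x}"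
      then obtain t where t: "m \<le> t" "t \<le> n" "x = \<sigma> t" "\<sigma> (m + j - 1) \<le> \<sigma> t" unfolding Rset_eq by auto
      then have "t \<le> m + j - 1" using dec_iff[of "m + j - 1" t] F' by auto
      then show "x \<in> \<sigma> ` {m..m + j - 1}" using t by auto
    qed
    show "\<sigma> ` {m..m + j - 1} \<subseteq> {x \<in> Rset n c. \<sigma> (m + j - 1) \<le> x}"
    proof
      fix x assume "x \<in> \<sigma> ` {m..m + j - 1}"
      then obtain t where t: "m \<le> t" "t \<le> m + j - 1" "x = \<sigma> t" by auto
      then have "\<sigma> (m + j - 1) \<le> \<sigma> t" using dec_iff[of "m + j - 1" t] F' by auto
      then show "x \<in> {x \<in> Rset n c. \<sigma> (m + j - 1) \<le> x}" unfolding Rset_eq using t F' by auto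
    qed
  qed
  moreover have "m + j - 1 \<le> n" using F' by arith
  moreover have "card {m..m + j - 1} = j" using F' by simp
  ultimately have cR: "card {x \<in> Rset n c. \<sigma> (m + j - 1) \<le> x} = j" by (simp add: card_img)
  show ?thesis unfolding rep_def phi_def Let_def using L R F' cL cR by simp
qed

lemma rep_nz: "rep n c f (l, r) \<noteq> 0 \<Longrightarrow> l \<in> Lset n c \<and> r \<in> Rset n c \<and> l < r"
  unfolding rep_def Let_def by (auto split: if_splits)

lemma W_char:
  assumes y: "(l, r) \<in> ar_k n k" "l \<in> Lset n c" "r \<in> Rset n c"
  shows "(l, r) \<in> phi ` sq (lamc n c) k"
proof -
  obtain a where a: "a < m" "l = \<sigma> a" using y(2) unfolding Lset_eq by auto
  obtain b where b: "m \<le> b" "b \<le> n" "r = \<sigma> b" using y(3) unfolding Rset_eq by auto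
  have lr: "l < r" "l \<le> k" "k < r" using y(1) unfolding ar_k_def ar_vert_def by auto
  have "(Suc a, Suc b - m) \<in> Fer (lamc n c)" unfolding Fer_iff using a b lr by simp
  then have "(Suc a, Suc b - m) \<in> sq (lamc n c) k" unfolding sq_iff using a b lr by simp
  moreover have "phi (Suc a, Suc b - m) = (l, r)" unfolding phi_def using a b by simp
  ultimately show ?thesis by force
qed

lemma phi_sub: "phi ` sq (lamc n c) k \<subseteq> ar_k n k"
proof
  fix y assume "y \<in> phi ` sq (lamc n c) k"
  then obtain i j where ij: "(i, j) \<in> sq (lamc n c) k" "y = phi (i, j)" by auto
  have F: "1 \<le> i" "i \<le> m" "1 \<le> j" "m + j \<le> Suc n" "\<sigma> (i - 1) < \<sigma> (m + j - 1)"
     "\<sigma> (i - 1) \<le> k" "k < \<sigma> (m + j - 1)" using ij(1) sq_iff Fer_iff by auto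
  have "1 \<le> \<sigma> (i - 1)" using srange[of "i - 1"] F mn by simp
  moreover have "\<sigma> (m + j - 1) \<le> Suc n" using srange[of "m + j - 1"] F by simp
  ultimately show "y \<in> ar_k n k" unfolding ij(2) phi_def ar_k_def ar_vert_def using F by simp
qed

lemma phi_inj: "inj_on phi (sq (lamc n c) k)"
proof (rule inj_onI)
  fix u v assume u: "u \<in> sq (lamc n c) k" and v: "v \<in> sq (lamc n c) k" and e: "phi u = phi v"
  obtain i j where uij: "u = (i, j)" by force
  obtain i' j' where vij: "v = (i', j')" by force
  have F: "1 \<le> i" "i \<le> m" "1 \<le> j" "m + j \<le> Suc n" using u uij sq_iff Fer_iff by auto
  have F': "1 \<le> i'" "i' \<le> m" "1 \<le> j'" "m + j' \<le> Suc n" using v vij sq_iff Fer_iff by auto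
  have "\<sigma> (i - 1) = \<sigma> (i' - 1)" "\<sigma> (m + j - 1) = \<sigma> (m + j' - 1)" using e uij vij unfolding phi_def by auto
  moreover have "i - 1 \<le> n" "i' - 1 \<le> n" "m + j - 1 \<le> n" "m + j' - 1 \<le> n" using F F' mn by arith+
  ultimately have "i - 1 = i' - 1" "m + j - 1 = m + j' - 1" using sinj by blast+
  then have "i = i'" "j = j'" using F(1,3) F'(1,3) by arith+
  then show "u = v" using uij vij by simp
qed

lemma c_col: "m \<le> b \<Longrightarrow> b \<le> n \<Longrightarrow> c (\<sigma> b) = (if b < n then \<sigma> (Suc b) else 1)"
  using cstep clast by auto

lemma edge_iff:
  assumes u: "(i, j) \<in> sq (lamc n c) k" and v: "(i', j') \<in> sq (lamc n c) k"
  shows "gl_edge (i, j) (i', j') \<longleftrightarrow> ar_edge c (phi (i, j)) (phi (i', j'))"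
proof -
  have F: "1 \<le> i" "i \<le> m" "1 \<le> j" "m + j \<le> Suc n" "\<sigma> (i - 1) < \<sigma> (m + j - 1)" using u sq_iff Fer_iff by auto
  have F': "1 \<le> i'" "i' \<le> m" "1 \<le> j'" "m + j' \<le> Suc n" "\<sigma> (i' - 1) < \<sigma> (m + j' - 1)" using v sq_iff Fer_iff by auto
  have ci: "c (\<sigma> (i - 1)) = \<sigma> i" using cstep[of "i - 1"] F mn by simp
  have cj: "c (\<sigma> (m + j - 1)) = (if m + j - 1 < n then \<sigma> (m + j) else 1)" using c_col[of "m + j - 1"] F by simp
  have s1: "1 \<le> \<sigma> (i - 1)" using srange[of "i - 1"] F mn by simp
  show ?thesis
  proof
    assume "gl_edge (i, j) (i', j')"
    then consider "i' = i" "j' = Suc j" | "i' = Suc i" "j' = j" unfolding gl_edge_def by (simp only: fst_conv snd_conv) blast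
    then show "ar_edge c (phi (i, j)) (phi (i', j'))"
    proof cases
      case 1
      then have "m + j - 1 < n" using F' by simp
      then have "c (\<sigma> (m + j - 1)) = \<sigma> (m + j' - 1)" using cj 1 by simp
      then show ?thesis unfolding ar_edge_def phi_def using 1 F' by simp
    next
      case 2
      then show ?thesis unfolding ar_edge_def phi_def using ci F' by simp
    qed
  next
    assume "ar_edge c (phi (i, j)) (phi (i', j'))"
    then have "(\<sigma> (i - 1) < c (\<sigma> (m + j - 1)) \<and> \<sigma> (i' - 1) = \<sigma> (i - 1) \<and> \<sigma> (m + j' - 1) = c (\<sigma> (m + j - 1)))
      \<or> (c (\<sigma> (i - 1)) < \<sigma> (m + j - 1) \<and> \<sigma> (i' - 1) = c (\<sigma> (i - 1)) \<and> \<sigma> (m + j' - 1) = \<sigma> (m + j - 1))"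
      unfolding ar_edge_def phi_def by (simp only: fst_conv snd_conv prod.inject)
    then consider "\<sigma> (i - 1) < c (\<sigma> (m + j - 1))" "\<sigma> (i' - 1) = \<sigma> (i - 1)" "\<sigma> (m + j' - 1) = c (\<sigma> (m + j - 1))"
      | "c (\<sigma> (i - 1)) < \<sigma> (m + j - 1)" "\<sigma> (i' - 1) = c (\<sigma> (i - 1))" "\<sigma> (m + j' - 1) = \<sigma> (m + j - 1)"
      by blast
    then show "gl_edge (i, j) (i', j')"
    proof cases
      case 1
      have lt: "m + j - 1 < n" using 1(1) cj s1 by (cases "m + j - 1 < n") auto
      then have "\<sigma> (m + j' - 1) = \<sigma> (m + j)" using 1(3) cj by simp
      then have e1: "m + j' - 1 = m + j" by (rule sinj[rotated 2]) (use lt F' in arith)+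
      have e2: "i' - 1 = i - 1" using 1(2) by (rule sinj[rotated 2]) (use F F' mn in arith)+
      have "i' = i" using e2 F(1) F'(1) by arith
      moreover have "j' = Suc j" using e1 F'(3) by arith
      ultimately have "i' = i" "j' = Suc j" by auto
      then show ?thesis unfolding gl_edge_def by simp
    next
      case 2
      have "\<sigma> (i' - 1) = \<sigma> i" using 2(2) ci by simp
      then have e1: "i' - 1 = i" by (rule sinj[rotated 2]) (use F F' mn in arith)+
      have e2: "m + j' - 1 = m + j - 1" using 2(3) by (rule sinj[rotated 2]) (use F F' in arith)+
      have "i' = Suc i" using e1 F'(1) by arith
      moreover have "j' = j" using e2 F(3) F'(3) by arith
      ultimately have "i' = Suc i" "j' = j" by auto
      then show ?thesis unfolding gl_edge_def by simp
    qed
  qed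
qed

lemma closure:
  assumes u: "(i, j) \<in> sq (lamc n c) k" and y: "y \<in> ar_k n k" and e: "ar_edge c (phi (i, j)) y"
  shows "y \<in> phi ` sq (lamc n c) k"
proof -
  have F: "1 \<le> i" "i \<le> m" "1 \<le> j" "m + j \<le> Suc n" "\<sigma> (i - 1) < \<sigma> (m + j - 1)" using u sq_iff Fer_iff by auto
  have ci: "c (\<sigma> (i - 1)) = \<sigma> i" using cstep[of "i - 1"] F mn by simp
  have cj: "c (\<sigma> (m + j - 1)) = (if m + j - 1 < n then \<sigma> (m + j) else 1)" using c_col[of "m + j - 1"] F by simp
  have s1: "1 \<le> \<sigma> (i - 1)" using srange[of "i - 1"] F mn by simp
  have L: "\<sigma> (i - 1) \<in> Lset n c" unfolding Lset_eq using F by auto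
  have R: "\<sigma> (m + j - 1) \<in> Rset n c" unfolding Rset_eq using F by (intro imageI) auto
  from e have "(\<sigma> (i - 1) < c (\<sigma> (m + j - 1)) \<and> y = (\<sigma> (i - 1), c (\<sigma> (m + j - 1))))
      \<or> (c (\<sigma> (i - 1)) < \<sigma> (m + j - 1) \<and> y = (c (\<sigma> (i - 1)), \<sigma> (m + j - 1)))"
    unfolding ar_edge_def phi_def by (simp only: fst_conv snd_conv)
  then consider "\<sigma> (i - 1) < c (\<sigma> (m + j - 1))" "y = (\<sigma> (i - 1), c (\<sigma> (m + j - 1)))"
      | "c (\<sigma> (i - 1)) < \<sigma> (m + j - 1)" "y = (c (\<sigma> (i - 1)), \<sigma> (m + j - 1))"
    by blast
  then show ?thesis
  proof cases
    case 1
    have lt: "m + j - 1 < n"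
    proof (rule ccontr)
      assume "\<not> m + j - 1 < n"
      then have "c (\<sigma> (m + j - 1)) = 1" using cj by simp
      then show False using 1(1) s1 by simp
    qed
    then have cjv: "c (\<sigma> (m + j - 1)) = \<sigma> (m + j)" using cj by simp
    have mj: "m + j \<in> {m..n}" using lt F by auto
    have Rm: "\<sigma> (m + j) \<in> Rset n c" unfolding Rset_eq using mj by (rule imageI)
    have yy: "y = (\<sigma> (i - 1), \<sigma> (m + j))" using 1(2) cjv by simp
    show ?thesis using W_char[of "\<sigma> (i - 1)" "\<sigma> (m + j)" k] y L Rm unfolding yy by blast
  next
    case 2
    have "i \<noteq> m"
    proof
      assume "i = m"
      then have "c (\<sigma> (i - 1)) = Suc n" using ci sm by simp
      moreover have "m + j - 1 \<le> n" using F by arith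
      ultimately show False using 2(1) srange[of "m + j - 1"] by simp
    qed
    then have im: "i \<in> {0..<m}" using F by auto
    have Lm: "\<sigma> i \<in> Lset n c" unfolding Lset_eq using im by (rule imageI)
    have yy: "y = (\<sigma> i, \<sigma> (m + j - 1))" using 2(2) ci by simp
    show ?thesis using W_char[of "\<sigma> i" "\<sigma> (m + j - 1)" k] y R Lm unfolding yy by blast
  qed
qed

lemma sq_sub_Fer: "x \<in> sq (lamc n c) k \<Longrightarrow> x \<in> Fer (lamc n c)"
  unfolding sq_def by simp

lemma main:
  assumes b: "b \<in> Fer (lamc n c)"
  shows "RSK_lam_c n c f b = RSK_lam (lamc n c) f b"
proof -
  obtain i j where bij: "b = (i, j)" by force
  define k where "k = box_k (lamc n c) b"
  have F: "1 \<le> i" "i \<le> m" "1 \<le> j" "m + j \<le> Suc n" using b bij Fer_iff by auto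
  have kk: "k = Suc n - m + i - j" unfolding k_def box_k_def bij lam1 by simp
  have "lamc n c 1 + i = k + j" unfolding kk lam1 using F mn by arith
  then have bD: "b \<in> Diag (lamc n c) k" unfolding Diag_def using b bij by simp
  have bsq: "b \<in> sq (lamc n c) k" unfolding sq_def using b bD by blast
  let ?V1 = "sq (lamc n c) k" and ?V2 = "ar_k n k"
  have fin1: "finite ?V1"
  proof (rule finite_subset)
    show "?V1 \<subseteq> {..m} \<times> {..Suc n}"
    proof
      fix x assume x: "x \<in> ?V1"
      obtain i' j' where "x = (i', j')" by force
      then show "x \<in> {..m} \<times> {..Suc n}" using x sq_iff Fer_iff by auto
    qed
  qed simp
  have fin2: "finite ?V2"
    by (rule finite_subset[of _ "{..Suc n} \<times> {..Suc n}"]) (auto simp: ar_k_def ar_vert_def)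
  have ne: "?V1 \<noteq> {}" using bsq by blast
  have g: "\<forall>x\<in>?V1. rep n c f (phi x) = f x"
  proof
    fix x assume x: "x \<in> ?V1"
    obtain i' j' where "x = (i', j')" by force
    then show "rep n c f (phi x) = f x" using rep_phi sq_sub_Fer x by simp
  qed
  have e1: "\<forall>x\<in>?V1. \<forall>y\<in>?V1. gl_edge x y \<longrightarrow> ar_edge c (phi x) (phi y)"
  proof (intro ballI impI)
    fix x y assume x: "x \<in> ?V1" and y: "y \<in> ?V1" and e: "gl_edge x y"
    obtain i1 j1 where "x = (i1, j1)" by force
    moreover obtain i2 j2 where "y = (i2, j2)" by force
    ultimately show "ar_edge c (phi x) (phi y)" using edge_iff x y e by simp
  qed
  have e2: "\<forall>x\<in>?V1. \<forall>y\<in>?V1. ar_edge c (phi x) (phi y) \<longrightarrow> gl_edge x y"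
  proof (intro ballI impI)
    fix x y assume x: "x \<in> ?V1" and y: "y \<in> ?V1" and e: "ar_edge c (phi x) (phi y)"
    obtain i1 j1 where "x = (i1, j1)" by force
    moreover obtain i2 j2 where "y = (i2, j2)" by force
    ultimately show "gl_edge x y" using edge_iff x y e by simp
  qed
  have zero: "\<forall>y\<in>?V2. y \<notin> phi ` ?V1 \<longrightarrow> rep n c f y = 0"
  proof (intro ballI impI)
    fix y assume y: "y \<in> ?V2" "y \<notin> phi ` ?V1"
    obtain l r where lr: "y = (l, r)" by force
    show "rep n c f y = 0"
    proof (rule ccontr)
      assume "rep n c f y \<noteq> 0"
      then have "l \<in> Lset n c" "r \<in> Rset n c" using rep_nz lr by auto
      then have "y \<in> phi ` ?V1" using W_char y lr by simp
      then show False using y by simp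
    qed
  qed
  have clos: "\<forall>x\<in>phi ` ?V1. \<forall>y\<in>?V2. ar_edge c x y \<longrightarrow> y \<in> phi ` ?V1"
  proof (intro ballI impI)
    fix x y assume x: "x \<in> phi ` ?V1" and y: "y \<in> ?V2" and e: "ar_edge c x y"
    then obtain u where u: "u \<in> ?V1" "x = phi u" by blast
    obtain i1 j1 where "u = (i1, j1)" by force
    then show "y \<in> phi ` ?V1" using closure u y e by simp
  qed
  have eq: "\<And>t. gkM ?V1 gl_edge f t = gkM ?V2 (ar_edge c) (rep n c f) t"
  proof (rule antisym)
    fix t
    show "gkM ?V1 gl_edge f t \<le> gkM ?V2 (ar_edge c) (rep n c f) t"
      by (rule gkM_le_transfer[OF fin1 fin2 phi_inj phi_sub g e1 ne])
    show "gkM ?V2 (ar_edge c) (rep n c f) t \<le> gkM ?V1 gl_edge f t"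
      by (rule gkM_ge_transfer[OF fin1 fin2 phi_inj phi_sub g zero e2 clos ne])
  qed
  show ?thesis unfolding RSK_lam_c_def RSK_lam_def gk_part_def k_def[symmetric] using eq by simp
qed

end


theorem proposition6p4:
  fixes n :: nat and c :: "nat \<Rightarrow> nat"
  assumes "1 \<le> n" and "coxeter n c"
  shows "\<forall>f :: nat \<times> nat \<Rightarrow> nat. \<forall>b \<in> Fer (lamc n c).
           RSK_lam_c n c f b = RSK_lam (lamc n c) f b"
proof -
  obtain \<sigma> m where cs: "cstruct n c \<sigma> m" using cox_struct[OF assms] by blast
  interpret cx n c \<sigma> m using cs assms(1) by unfold_locales
  show ?thesis using main by blast
qed

end
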